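(* Let $P\subseteq S_n$ be a permutation array with ${\rm hd}(P)\ge 4$. Then ${\rm hd}(P^{\sf CT})\le{\rm hd}(P)$.
   Context: $S_n$ is the symmetric group on $\{0,1,\ldots,n-1\}$. A permutation array is a non-empty subset $P\subseteq S_n$; ${\rm hd}(\sigma,\tau)=|\{x:\sigma(x)\neq\tau(x)\}|$ and ${\rm hd}(P)=\min\{{\rm hd}(\sigma,\tau):\sigma,\tau\in P,\ \sigma\neq\tau\}$. The contraction of $\sigma\in S_n$ is $\sigma^{\sf CT}\in S_{n-1}$ (on $\{0,\ldots,n-2\}$) defined by $\sigma^{\sf CT}(x)=\sigma(n-1)$ if $x=\sigma^{-1}(n-1)$ and $\sigma^{\sf CT}(x)=\sigma(x)$ otherwise (i.e. delete $n-1$ from the cycle notation of $\sigma$); $P^{\sf CT}=\{\sigma^{\sf CT}:\sigma\in P\}$. *)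

theory Defs
  imports "HOL-Combinatorics.Permutations"
begin

definition Sym :: "nat \<Rightarrow> (nat \<Rightarrow> nat) set" where
  "Sym n = {\<sigma>. \<sigma> permutes {..<n}}"

definition hd :: "nat \<Rightarrow> (nat \<Rightarrow> nat) \<Rightarrow> (nat \<Rightarrow> nat) \<Rightarrow> nat" where
  "hd n \<sigma> \<tau> = card {x \<in> {..<n}. \<sigma> x \<noteq> \<tau> x}"

text \<open>Minimum distance of a permutation array P in S_n (meaningful when |P| >= 2).\<close>
definition hdP :: "nat \<Rightarrow> (nat \<Rightarrow> nat) set \<Rightarrow> nat" where
  "hdP n P = Min {hd n \<sigma> \<tau> | \<sigma> \<tau>. \<sigma> \<in> P \<and> \<tau> \<in> P \<and> \<sigma> \<noteq> \<tau>}"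

text \<open>Contraction: S_n -> S_(n-1), deleting n-1 from the cycle notation.\<close>
definition contr :: "nat \<Rightarrow> (nat \<Rightarrow> nat) \<Rightarrow> (nat \<Rightarrow> nat)" where
  "contr n \<sigma> = (\<lambda>x. if x < n - 1 then (if \<sigma> x = n - 1 then \<sigma> (n - 1) else \<sigma> x) else x)"

definition contrP :: "nat \<Rightarrow> (nat \<Rightarrow> nat) set \<Rightarrow> (nat \<Rightarrow> nat) set" where
  "contrP n P = contr n ` P"

end

theory Submission
  imports Defs
begin

lemma perm_pre:
  assumes "s permutes A" shows "s x = y \<longleftrightarrow> x = inv s y"
  using assms by (metis permutes_inverses(1) permutes_inverses(2))

lemma hd_contr_le:
  assumes s: "s permutes {..<n}" and t: "t permutes {..<n}" and n: "n \<ge> 1"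
  shows "hd (n - 1) (contr n s) (contr n t) \<le> hd n s t"
proof -
  define D where "D = {x \<in> {..<n}. s x \<noteq> t x}"
  define D' where "D' = {x \<in> {..<n-1}. contr n s x \<noteq> contr n t x}"
  define E where "E = {x. x < n - 1 \<and> s x = n - 1 \<and> t x = n - 1 \<and> s (n-1) \<noteq> t (n-1)}"
  have fD: "finite D" unfolding D_def by auto
  have sub: "D' \<subseteq> (D - {n-1}) \<union> E"
    unfolding D'_def D_def E_def contr_def by auto
  show ?thesis
  proof (cases "E = {}")
    case True
    hence "card D' \<le> card (D - {n-1})"
      using sub fD by (intro card_mono) auto
    also have "\<dots> \<le> card D" using fD by (intro card_mono) auto
    finally show ?thesis unfolding hd_def D_def D'_def .
  next
    case False
    then obtain e where e: "e \<in> E" by auto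
    have inD: "n - 1 \<in> D" using e n unfolding E_def D_def by auto
    have "E \<subseteq> {inv s (n-1)}" unfolding E_def using perm_pre[OF s] by auto
    hence "D' \<subseteq> insert (inv s (n-1)) (D - {n-1})" using sub by auto
    hence "card D' \<le> card (insert (inv s (n-1)) (D - {n-1}))"
      using fD by (intro card_mono) auto
    also have "\<dots> \<le> Suc (card (D - {n-1}))" by (rule card_insert_le_m1) auto
    also have "\<dots> = card D" using inD fD
      by (metis card_Suc_Diff1)
    finally show ?thesis unfolding hd_def D_def D'_def .
  qed
qed

lemma contr_neq:
  assumes s: "s permutes {..<n}" and t: "t permutes {..<n}" and h: "hd n s t \<ge> 4"
  shows "contr n s \<noteq> contr n t"
proof -
  define D where "D = {x \<in> {..<n}. s x \<noteq> t x}"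
  have fD: "finite D" unfolding D_def by auto
  have "card D \<ge> 4" using h unfolding hd_def D_def .
  moreover have "card (D - {n-1, inv s (n-1), inv t (n-1)}) \<ge> card D - 3"
  proof -
    have c1: "card {inv t (n-1)} = 1" by simp
    have c2: "card {inv s (n-1), inv t (n-1)} \<le> 2"
      by (auto simp: card_insert_if)
    have c3: "card {n-1, inv s (n-1), inv t (n-1)} \<le> 3"
      using c2 by (auto simp: card_insert_if)
    have "card D - card {n-1, inv s (n-1), inv t (n-1)} \<le> card (D - {n-1, inv s (n-1), inv t (n-1)})"
      by (rule diff_card_le_card_Diff) simp
    thus ?thesis using c3 by linarith
  qed
  ultimately have "card (D - {n-1, inv s (n-1), inv t (n-1)}) \<ge> 1" by linarith
  hence "D - {n-1, inv s (n-1), inv t (n-1)} \<noteq> {}" by (metis card.empty not_one_le_zero)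
  then obtain x where x: "x \<in> D" "x \<noteq> n-1" "x \<noteq> inv s (n-1)" "x \<noteq> inv t (n-1)" by auto
  have "s x \<noteq> n - 1" "t x \<noteq> n - 1" using x perm_pre[OF s] perm_pre[OF t] by auto
  moreover have "x < n - 1" using x unfolding D_def by auto
  ultimately have "contr n s x \<noteq> contr n t x" using x unfolding contr_def D_def by auto
  thus ?thesis by auto
qed

theorem corollary3p4:
  fixes n :: nat and P :: "(nat \<Rightarrow> nat) set"
  assumes "P \<subseteq> Sym n"
    and "card P \<ge> 2"
    and "hdP n P \<ge> 4"
  shows "hdP (n - 1) (contrP n P) \<le> hdP n P"
proof -
  have fP: "finite P" using assms(2) by (metis card.infinite not_numeral_le_zero)
  define S where "S = {hd n \<sigma> \<tau> | \<sigma> \<tau>. \<sigma> \<in> P \<and> \<tau> \<in> P \<and> \<sigma> \<noteq> \<tau>}"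
  have "S \<subseteq> (\<lambda>(a,b). hd n a b) ` (P \<times> P)" unfolding S_def by auto
  hence fS: "finite S" using fP by (meson finite_SigmaI finite_imageI finite_subset)
  have "P \<noteq> {}" using assms(2) by auto
  then obtain a where a: "a \<in> P" by auto
  have "card (P - {a}) \<ge> 1" using assms(2) a fP by (simp add: card_Diff_singleton)
  hence "P - {a} \<noteq> {}" by (metis card.empty not_one_le_zero)
  then obtain b where "b \<in> P - {a}" by auto
  hence ab: "a \<in> P" "b \<in> P" "a \<noteq> b" using a by auto
  hence "S \<noteq> {}" unfolding S_def by auto
  hence "Min S \<in> S" using fS by simp
  then obtain s t where st: "s \<in> P" "t \<in> P" "s \<noteq> t" "hd n s t = hdP n P"
    unfolding S_def hdP_def by auto
  have sp: "s permutes {..<n}" "t permutes {..<n}" using st assms(1) unfolding Sym_def by auto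
  have h4: "hd n s t \<ge> 4" using st assms(3) by simp
  have n1: "n \<ge> 1"
  proof (rule ccontr)
    assume "\<not> n \<ge> 1" hence "n = 0" by simp
    hence "hd n s t = 0" unfolding hd_def by simp
    thus False using h4 by simp
  qed
  have ne: "contr n s \<noteq> contr n t" by (rule contr_neq[OF sp h4])
  define S' where "S' = {hd (n-1) \<sigma> \<tau> | \<sigma> \<tau>. \<sigma> \<in> contrP n P \<and> \<tau> \<in> contrP n P \<and> \<sigma> \<noteq> \<tau>}"
  have fC: "finite (contrP n P)" unfolding contrP_def using fP by simp
  have "S' \<subseteq> (\<lambda>(a,b). hd (n-1) a b) ` (contrP n P \<times> contrP n P)" unfolding S'_def by auto
  hence fS': "finite S'" using fC by (meson finite_SigmaI finite_imageI finite_subset)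
  have "hd (n-1) (contr n s) (contr n t) \<in> S'"
    unfolding S'_def contrP_def using st ne by blast
  hence "hdP (n-1) (contrP n P) \<le> hd (n-1) (contr n s) (contr n t)"
    unfolding hdP_def S'_def[symmetric] using fS' by simp
  also have "\<dots> \<le> hd n s t" by (rule hd_contr_le[OF sp n1])
  finally show ?thesis using st by simp
qed

end
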